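(* Let $\alpha,\beta\in(0,1/2)$ and $\epsilon\in(0,1/2)$. There exists a constant $c>0$ depending only on $\alpha,\beta,\epsilon$ such that the following holds for all positive integers $n$ and $N$. Suppose there exists a test which, given two independent samples $X^1$ and $X^2$, each of $N$ i.i.d. observations from unknown distributions $p\in\Delta_n$ and $q\in\Delta_n$ on $\Omega=\{1,\dots,n\}$ respectively, outputs $H_0$ or $H_1$, such that (1) for every distribution $p$, when $q=p$ the probability of outputting $H_1$ is at most $\alpha$; and (2) for all $p,q\in\Delta_n$ with $\|p-q\|_2\ge\epsilon\|p\|_2$, the probability of outputting $H_0$ is at most $\beta$. Then $N\ge c\sqrt n$.
   Context: $\Delta_n=\{r\in\mathbb{R}^n:r\ge0,\sum_ir_i=1\}$ is the set of probability distributions on $\{1,\dots,n\}$. *)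

theory Defs
  imports Complex_Main "HOL-Library.FuncSet"
begin

definition simplex :: "nat \<Rightarrow> (nat \<Rightarrow> real) set" where
  "simplex n = {r. (\<forall>i\<in>{1..n}. 0 \<le> r i) \<and> (\<Sum>i=1..n. r i) = 1 \<and> (\<forall>i. i \<notin> {1..n} \<longrightarrow> r i = 0)}"

definition l2norm :: "nat \<Rightarrow> (nat \<Rightarrow> real) \<Rightarrow> real" where
  "l2norm n r = sqrt (\<Sum>i=1..n. (r i)^2)"

definition samples :: "nat \<Rightarrow> nat \<Rightarrow> (nat \<Rightarrow> nat) set" where
  "samples n N = ({..<N} \<rightarrow>\<^sub>E {1..n})"

definition sample_prob :: "(nat \<Rightarrow> real) \<Rightarrow> nat \<Rightarrow> (nat \<Rightarrow> nat) \<Rightarrow> real" where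
  "sample_prob p N x = (\<Prod>j<N. p (x j))"

text \<open>A test psi X1 X2 = True means output H1, False means output H0.
  Probability that the test outputs H1 (resp. H0) when X1 ~ p^N, X2 ~ q^N independent.\<close>
definition prob_H1 :: "nat \<Rightarrow> nat \<Rightarrow> (nat \<Rightarrow> real) \<Rightarrow> (nat \<Rightarrow> real) \<Rightarrow>
    ((nat \<Rightarrow> nat) \<Rightarrow> (nat \<Rightarrow> nat) \<Rightarrow> bool) \<Rightarrow> real" where
  "prob_H1 n N p q psi = (\<Sum>x1\<in>samples n N. \<Sum>x2\<in>samples n N.
      (if psi x1 x2 then sample_prob p N x1 * sample_prob q N x2 else 0))"

definition prob_H0 :: "nat \<Rightarrow> nat \<Rightarrow> (nat \<Rightarrow> real) \<Rightarrow> (nat \<Rightarrow> real) \<Rightarrow>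
    ((nat \<Rightarrow> nat) \<Rightarrow> (nat \<Rightarrow> nat) \<Rightarrow> bool) \<Rightarrow> real" where
  "prob_H0 n N p q psi = (\<Sum>x1\<in>samples n N. \<Sum>x2\<in>samples n N.
      (if psi x1 x2 then 0 else sample_prob p N x1 * sample_prob q N x2))"

end

theory Submission
  imports Defs "HOL-Analysis.Convex"
begin

lemma sum_samples_prod:
  "(\<Sum>x\<in>samples n N. \<Prod>j<N. g (x j)) = (\<Sum>i=1..n. (g i :: real)) ^ N"
proof -
  have "(\<Prod>j\<in>{..<N}. \<Sum>i\<in>{1..n}. g i) = (\<Sum>x\<in>PiE {..<N} (\<lambda>_. {1..n}). \<Prod>j\<in>{..<N}. g (x j))"
    by (rule prod_sum_PiE) auto
  then show ?thesis by (simp add: samples_def)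
qed

lemma card_samples: "card (samples n N) = n ^ N"
  by (simp add: samples_def card_PiE)

lemma finite_samples: "finite (samples n N)"
  by (simp add: samples_def finite_PiE)

lemma pairsum: "(\<Sum>i=1..2*(K::nat). g i) = (\<Sum>k<K. g (2*k+1) + g (2*k+2) :: real)"
proof (induction K)
  case 0 then show ?case by simp
next
  case (Suc K)
  have "{1..2*Suc K} = insert (2*K+2) (insert (2*K+1) {1..2*K})" by auto
  then have "(\<Sum>i=1..2*Suc K. g i) = g (2*K+2) + (g (2*K+1) + (\<Sum>i=1..2*K. g i))"
    by simp
  then show ?case using Suc by simp
qed

lemma exp_pm_bound:
  fixes b :: real assumes "0 \<le> b" "b \<le> 1"
  shows "exp b + exp (-b) \<le> 2 + 2 * b^2"
proof -
  have 1: "exp b \<le> 1 + b + b^2" using exp_bound assms by auto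
  have 2: "1 + b \<le> exp b" by (rule exp_ge_add_one_self)
  have "exp (-b) = 1 / exp b" by (simp add: exp_minus field_simps)
  also have "\<dots> \<le> 1 / (1 + b)" using 2 assms by (intro divide_left_mono) auto
  also have "\<dots> \<le> 1 - b + b^2"
    using assms by (simp add: field_simps power2_eq_square)
  finally show ?thesis using 1 by simp
qed

definition sg :: "nat \<Rightarrow> (nat \<Rightarrow> real) \<Rightarrow> nat \<Rightarrow> real" where
  "sg K s i = (if 1 \<le> i \<and> i \<le> 2*K then s ((i-1) div 2) * (if odd i then 1 else -1) else 0)"

lemma sg_odd: "k < K \<Longrightarrow> sg K s (2*k+1) = s k"
  by (simp add: sg_def)
lemma sg_even: "k < K \<Longrightarrow> sg K s (2*k+2) = - s k"
proof -
  assume "k < K"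
  moreover have "(2*k+2-1) div 2 = k" by presburger
  ultimately show ?thesis by (simp add: sg_def)
qed

lemma sg_odd': "k < K \<Longrightarrow> sg K s (Suc (2*k)) = s k"
  using sg_odd by simp
lemma sg_even': "k < K \<Longrightarrow> sg K s (Suc (Suc (2*k))) = - s k"
  using sg_even by simp

lemma sum_restrict2K:
  assumes "2*(K::nat) \<le> n" "\<And>i. i > 2*K \<Longrightarrow> f i = (0::real)"
  shows "(\<Sum>i=1..n. f i) = (\<Sum>i=1..2*K. f i)"
  using assms by (intro sum.mono_neutral_right) auto

lemma sg_zero: "i > 2*K \<Longrightarrow> sg K s i = 0"
  by (simp add: sg_def)

lemma sg_sum0:
  assumes "2*K \<le> n" shows "(\<Sum>i=1..n. sg K s i) = 0"
proof -
  have "(\<Sum>i=1..n. sg K s i) = (\<Sum>i=1..2*K. sg K s i)"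
    by (rule sum_restrict2K) (use assms sg_zero in auto)
  also have "\<dots> = (\<Sum>k<K. sg K s (2*k+1) + sg K s (2*k+2))" by (rule pairsum)
  also have "\<dots> = 0" by (rule sum.neutral) (auto simp: sg_odd' sg_even')
  finally show ?thesis .
qed

lemma sg_sum2:
  assumes "2*K \<le> n" shows "(\<Sum>i=1..n. sg K s i * sg K s' i) = 2 * (\<Sum>k<K. s k * s' k)"
proof -
  have "(\<Sum>i=1..n. sg K s i * sg K s' i) = (\<Sum>i=1..2*K. sg K s i * sg K s' i)"
    by (rule sum_restrict2K) (use assms sg_zero in auto)
  also have "\<dots> = (\<Sum>k<K. sg K s (2*k+1) * sg K s' (2*k+1) + sg K s (2*k+2) * sg K s' (2*k+2))"
    by (rule pairsum)
  also have "\<dots> = 2 * (\<Sum>k<K. s k * s' k)" by (auto simp: sg_odd' sg_even' sum_distrib_left intro!: sum.cong)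
  finally show ?thesis .
qed

definition SS :: "nat \<Rightarrow> (nat \<Rightarrow> real) set" where
  "SS K = PiE {..<K} (\<lambda>_. {-1,1})"

definition qs :: "nat \<Rightarrow> (nat \<Rightarrow> real) \<Rightarrow> nat \<Rightarrow> real" where
  "qs n s i = (if i \<in> {1..n} then (1 + sg (n div 2) s i) / n else 0)"

lemma finite_SS: "finite (SS K)" by (simp add: SS_def finite_PiE)
lemma card_SS: "card (SS K) = 2 ^ K" by (simp add: SS_def card_PiE eval_nat_numeral)

lemma SS_val: "s \<in> SS K \<Longrightarrow> k < K \<Longrightarrow> s k = 1 \<or> s k = -1"
  by (auto simp: SS_def PiE_def Pi_def)

lemma SS_sq: "s \<in> SS K \<Longrightarrow> k < K \<Longrightarrow> s k * s k = 1"
  using SS_val by fastforce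

lemma sg_ge: "s \<in> SS K \<Longrightarrow> sg K s i \<ge> -1"
proof -
  assume s: "s \<in> SS K"
  show ?thesis
  proof (cases "1 \<le> i \<and> i \<le> 2*K")
    case True
    then have "(i-1) div 2 < K" by linarith
    then show ?thesis using SS_val[OF s, of "(i-1) div 2"] True by (auto simp: sg_def)
  qed (auto simp: sg_def)
qed

lemma qs_nonneg: "s \<in> SS (n div 2) \<Longrightarrow> qs n s i \<ge> 0"
  using sg_ge[of s "n div 2" i] by (simp add: qs_def)

lemma qs_simplex: assumes "s \<in> SS (n div 2)" "n \<ge> 1" shows "qs n s \<in> simplex n"
proof -
  have "(\<Sum>i=1..n. qs n s i) = (\<Sum>i=1..n. (1 + sg (n div 2) s i) / n)"
    by (simp add: qs_def)
  also have "\<dots> = (real n + (\<Sum>i=1..n. sg (n div 2) s i)) / n"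
    by (simp add: sum_divide_distrib[symmetric] sum.distrib)
  also have "\<dots> = 1" using assms sg_sum0[of "n div 2" n s] by simp
  moreover have "\<forall>i\<in>{1..n}. 0 \<le> qs n s i" using qs_nonneg[OF assms(1)] by blast
  ultimately show ?thesis by (auto simp: simplex_def qs_def)
qed

lemma qs_inner:
  assumes "n \<ge> 1"
  shows "real n * (\<Sum>i=1..n. qs n s i * qs n s' i) = 1 + 2 / n * (\<Sum>k<n div 2. s k * s' k)"
proof -
  let ?K = "n div 2"
  have "(\<Sum>i=1..n. qs n s i * qs n s' i) = (\<Sum>i=1..n. (1 + sg ?K s i + sg ?K s' i + sg ?K s i * sg ?K s' i) / n^2)"
    by (auto simp: qs_def power2_eq_square algebra_simps intro!: sum.cong)
  also have "\<dots> = (real n + (\<Sum>i=1..n. sg ?K s i) + (\<Sum>i=1..n. sg ?K s' i) + (\<Sum>i=1..n. sg ?K s i * sg ?K s' i)) / n^2"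
    by (simp add: sum_divide_distrib[symmetric] sum.distrib)
  also have "\<dots> = (real n + 2 * (\<Sum>k<?K. s k * s' k)) / n^2"
    using sg_sum0[of "n div 2" n s] sg_sum0[of "n div 2" n s'] sg_sum2[of "n div 2" n s s'] by simp
  finally show ?thesis using assms by (simp add: field_simps power2_eq_square)
qed

lemma exp_avg:
  assumes s: "s \<in> SS K" and b: "0 \<le> b" "b \<le> 1"
  shows "(\<Sum>s'\<in>SS K. exp (b * (\<Sum>k<K. s k * s' k))) \<le> (2 + 2 * b^2) ^ K"
proof -
  have "(\<Sum>s'\<in>SS K. exp (b * (\<Sum>k<K. s k * s' k))) = (\<Sum>s'\<in>SS K. \<Prod>k<K. exp (b * s k * s' k))"
    by (simp add: sum_distrib_left exp_sum mult.assoc)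
  also have "\<dots> = (\<Prod>k<K. \<Sum>v\<in>{-1,1}. exp (b * s k * v))"
    unfolding SS_def by (rule prod_sum_PiE[symmetric]) auto
  also have "\<dots> \<le> (\<Prod>k<K. 2 + 2 * b^2)"
  proof (rule prod_mono)
    fix k assume "k \<in> {..<K}"
    then have "s k = 1 \<or> s k = -1" using SS_val[OF s] by auto
    then have "(\<Sum>v\<in>{-1,1}. exp (b * s k * v)) = exp b + exp (-b)" by auto
    then show "0 \<le> (\<Sum>v\<in>{-1,1}. exp (b * s k * v)) \<and> (\<Sum>v\<in>{-1,1}. exp (b * s k * v)) \<le> 2 + 2 * b^2"
      using exp_pm_bound[OF b] by (simp add: add_nonneg_nonneg)
  qed
  finally show ?thesis by simp
qed

lemma pair_term:
  assumes n: "n \<ge> 1" and s: "s \<in> SS (n div 2)" and s': "s' \<in> SS (n div 2)"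
  shows "real n ^ N * (\<Sum>x\<in>samples n N. sample_prob (qs n s) N x * sample_prob (qs n s') N x)
     \<le> exp (2 * real N / real n * (\<Sum>k<n div 2. s k * s' k))"
proof -
  let ?Z = "\<Sum>k<n div 2. s k * s' k"
  have "(\<Sum>x\<in>samples n N. sample_prob (qs n s) N x * sample_prob (qs n s') N x)
      = (\<Sum>x\<in>samples n N. \<Prod>j<N. qs n s (x j) * qs n s' (x j))"
    by (simp add: sample_prob_def prod.distrib)
  also have "\<dots> = (\<Sum>i=1..n. qs n s i * qs n s' i) ^ N" by (rule sum_samples_prod)
  finally have "real n ^ N * (\<Sum>x\<in>samples n N. sample_prob (qs n s) N x * sample_prob (qs n s') N x)
      = (real n * (\<Sum>i=1..n. qs n s i * qs n s' i)) ^ N" by (simp add: power_mult_distrib)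
  also have "\<dots> = (1 + 2 / n * ?Z) ^ N" using qs_inner[OF n] by simp
  also have "\<dots> \<le> exp (2 / n * ?Z) ^ N"
  proof (rule power_mono)
    have "0 \<le> real n * (\<Sum>i=1..n. qs n s i * qs n s' i)"
      using qs_nonneg[OF s] qs_nonneg[OF s'] by (intro mult_nonneg_nonneg sum_nonneg) auto
    then show "0 \<le> 1 + 2 / n * ?Z" using qs_inner[OF n] by simp
  qed (rule exp_ge_add_one_self)
  also have "\<dots> = exp (2 * real N / real n * ?Z)" by (simp add: exp_of_nat_mult[symmetric] algebra_simps)
  finally show ?thesis .
qed

lemma W2:
  assumes n: "n \<ge> 1" and Nn: "2 * N \<le> n"
  shows "real n ^ N * (\<Sum>x\<in>samples n N. ((\<Sum>s\<in>SS (n div 2). sample_prob (qs n s) N x) / 2 ^ (n div 2))^2)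
     \<le> (1 + (2 * real N / real n)^2) ^ (n div 2)"
proof -
  define K where "K = n div 2"
  define b :: real where "b = 2 * real N / real n"
  have b0: "0 \<le> b" and b1: "b \<le> 1" using Nn n by (auto simp: b_def field_simps)
  have "(\<Sum>x\<in>samples n N. ((\<Sum>s\<in>SS K. sample_prob (qs n s) N x) / 2 ^ K)^2)
      = (\<Sum>x\<in>samples n N. (\<Sum>s\<in>SS K. \<Sum>s'\<in>SS K. sample_prob (qs n s) N x * sample_prob (qs n s') N x) / (2^K)^2)"
    by (simp add: power_divide power2_eq_square sum_product)
  also have "\<dots> = (\<Sum>s\<in>SS K. \<Sum>s'\<in>SS K. \<Sum>x\<in>samples n N. sample_prob (qs n s) N x * sample_prob (qs n s') N x) / (2^K)^2"
    by (simp add: sum_divide_distrib[symmetric] sum.swap[of _ "samples n N"])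
  finally have eq: "real n ^ N * (\<Sum>x\<in>samples n N. ((\<Sum>s\<in>SS K. sample_prob (qs n s) N x) / 2 ^ K)^2)
     = (\<Sum>s\<in>SS K. \<Sum>s'\<in>SS K. real n ^ N * (\<Sum>x\<in>samples n N. sample_prob (qs n s) N x * sample_prob (qs n s') N x)) / (2^K)^2"
    by (simp add: sum_distrib_left)
  also have "\<dots> \<le> (\<Sum>s\<in>SS K. \<Sum>s'\<in>SS K. exp (b * (\<Sum>k<K. s k * s' k))) / (2^K)^2"
    unfolding b_def K_def
    by (intro divide_right_mono sum_mono pair_term[OF n]) simp_all
  also have "\<dots> \<le> (\<Sum>s\<in>SS K. (2 + 2 * b^2) ^ K) / (2^K)^2"
    by (intro divide_right_mono sum_mono exp_avg b0 b1) auto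
  also have "\<dots> = (1 + b^2) ^ K"
  proof -
    have "(2 + 2 * b^2) ^ K = 2^K * (1 + b^2) ^ K"
      by (simp add: power_mult_distrib[symmetric])
    then show ?thesis by (simp add: card_SS power2_eq_square)
  qed
  finally show ?thesis unfolding K_def b_def .
qed

lemma core:
  fixes psi :: "(nat \<Rightarrow> nat) \<Rightarrow> (nat \<Rightarrow> nat) \<Rightarrow> bool" and \<alpha> \<beta> \<epsilon> :: real
  assumes n: "n \<ge> 2" and Nn: "2 * N \<le> n" and e0: "0 < \<epsilon>" and e1: "\<epsilon> < 1/2"
    and H1: "\<forall>p\<in>simplex n. prob_H1 n N p p psi \<le> \<alpha>"
    and H0: "\<forall>p\<in>simplex n. \<forall>q\<in>simplex n.
              l2norm n (\<lambda>i. p i - q i) \<ge> \<epsilon> * l2norm n p \<longrightarrow> prob_H0 n N p q psi \<le> \<beta>"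
  shows "1 - \<alpha> - \<beta> \<le> sqrt ((1 + (2 * real N / real n)^2) ^ (n div 2) - 1)"
proof -
  define K where "K = n div 2"
  define M :: real where "M = 2 ^ K"
  have M0: "M > 0" by (simp add: M_def)
  define u :: "nat \<Rightarrow> real" where "u i = (if i \<in> {1..n} then 1 / n else 0)" for i
  define c0 :: real where "c0 = (1 / n) ^ N"
  define S where "S = samples n N"
  define W where "W x = (\<Sum>s\<in>SS K. sample_prob (qs n s) N x) / M" for x
  define ind where "ind x1 x2 = (if psi x1 x2 then 0 else (1::real))" for x1 x2
  have finS: "finite S" by (simp add: S_def finite_samples)
  have cardS: "real (card S) = real n ^ N" by (simp add: S_def card_samples)
  have ind01: "0 \<le> ind x1 x2" "ind x1 x2 \<le> 1" for x1 x2 by (auto simp: ind_def)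
  have u_simp: "u \<in> simplex n" using n by (auto simp: simplex_def u_def)
  have spu: "sample_prob u N x = c0" if "x \<in> S" for x
  proof -
    have "sample_prob u N x = (\<Prod>j<N. 1 / real n)"
      unfolding sample_prob_def using that by (intro prod.cong) (auto simp: u_def S_def samples_def PiE_def)
    then show ?thesis by (simp add: c0_def)
  qed
  have c0n: "c0 * real n ^ N = 1" using n by (simp add: c0_def power_divide)
  have sum_sp: "(\<Sum>x\<in>S. sample_prob p N x) = 1" if "p \<in> simplex n" for p
  proof -
    have "(\<Sum>x\<in>S. sample_prob p N x) = (\<Sum>i=1..n. p i) ^ N"
      unfolding S_def sample_prob_def by (rule sum_samples_prod)
    then show ?thesis using that by (simp add: simplex_def)
  qed
  have sumu: "(\<Sum>x\<in>S. sample_prob u N x) = 1" by (rule sum_sp[OF u_simp])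
  have h0def: "prob_H0 n N p q psi = (\<Sum>x1\<in>S. \<Sum>x2\<in>S. ind x1 x2 * sample_prob p N x1 * sample_prob q N x2)" for p q
    unfolding prob_H0_def S_def ind_def by (intro sum.cong) auto
  have "prob_H0 n N u u psi + prob_H1 n N u u psi = (\<Sum>x1\<in>S. \<Sum>x2\<in>S. sample_prob u N x1 * sample_prob u N x2)"
    by (simp add: prob_H0_def prob_H1_def S_def sum.distrib[symmetric] if_distrib cong: if_cong)
  also have "\<dots> = 1" using sumu by (simp add: sum_product[symmetric])
  finally have H0uu: "prob_H0 n N u u psi \<ge> 1 - \<alpha>" using H1 u_simp by auto
  have dist: "l2norm n (\<lambda>i. u i - qs n s i) \<ge> \<epsilon> * l2norm n u" if s: "s \<in> SS K" for s
  proof -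
    have "(\<Sum>i=1..n. (u i - qs n s i)^2) = (\<Sum>i=1..n. sg K s i * sg K s i) / n^2"
      by (auto simp: sum_divide_distrib u_def qs_def K_def power2_eq_square field_simps intro!: sum.cong)
    also have "\<dots> = 2 * K / n^2"
      using sg_sum2[of K n s s] SS_sq[OF s] by (simp add: K_def)
    finally have a: "(\<Sum>i=1..n. (u i - qs n s i)^2) = 2 * K / n^2" .
    have b: "(\<Sum>i=1..n. (u i)^2) = 1 / n" using n by (simp add: u_def power2_eq_square)
    have "\<epsilon> * l2norm n u = sqrt (\<epsilon>^2 / n)"
      unfolding l2norm_def b using e0 by (simp add: real_sqrt_mult real_sqrt_divide)
    also have "\<dots> \<le> sqrt (2 * K / n^2)"
    proof (rule real_sqrt_le_mono)
      have "2 * K \<ge> n - 1" unfolding K_def by linarith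
      then have "real (2*K) \<ge> real n - 1" by linarith
      have "\<epsilon>^2 \<le> (1/2)^2" by (rule power_mono) (use e0 e1 in auto)
      then have e2: "\<epsilon>^2 * n \<le> (1/2)^2 * n" by (rule mult_right_mono) auto
      have n2: "real n \<ge> 2" using n by simp
      have e3: "\<epsilon>^2 * n \<le> real n / 4" using e2 by (simp add: power_divide)
      have "\<epsilon>^2 * n \<le> 2 * K" using \<open>real (2*K) \<ge> real n - 1\<close> e3 n2 by linarith
      then show "\<epsilon>^2 / n \<le> 2 * K / n^2" using n by (simp add: field_simps power2_eq_square)
    qed
    finally show ?thesis by (simp only: l2norm_def a)
  qed
  have H0s: "prob_H0 n N u (qs n s) psi \<le> \<beta>" if "s \<in> SS K" for s
    using H0 u_simp qs_simplex[of s n] that dist[OF that] n by (auto simp: K_def)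
  have "(\<Sum>s\<in>SS K. prob_H0 n N u (qs n s) psi) / M \<le> (\<Sum>s\<in>SS K. \<beta>) / M"
    using M0 H0s by (intro divide_right_mono sum_mono) auto
  also have "\<dots> = \<beta>" by (simp add: M_def card_SS)
  finally have avg: "(\<Sum>s\<in>SS K. prob_H0 n N u (qs n s) psi) / M \<le> \<beta>" .
  have avg_eq: "(\<Sum>s\<in>SS K. prob_H0 n N u (qs n s) psi) / M
      = (\<Sum>x1\<in>S. \<Sum>x2\<in>S. ind x1 x2 * sample_prob u N x1 * W x2)"
    unfolding h0def W_def
    by (simp add: sum_divide_distrib sum_distrib_left sum.swap[of _ "SS K"])
  define T where "T = (\<Sum>x2\<in>S. \<bar>c0 - W x2\<bar>)"
  have "prob_H0 n N u u psi - (\<Sum>s\<in>SS K. prob_H0 n N u (qs n s) psi) / M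
      = (\<Sum>x1\<in>S. \<Sum>x2\<in>S. ind x1 x2 * sample_prob u N x1 * (c0 - W x2))"
  proof -
    have "prob_H0 n N u u psi = (\<Sum>x1\<in>S. \<Sum>x2\<in>S. ind x1 x2 * sample_prob u N x1 * c0)"
      unfolding h0def by (intro sum.cong refl) (simp add: spu)
    then show ?thesis unfolding avg_eq by (simp add: sum_subtractf[symmetric] right_diff_distrib)
  qed
  also have "\<dots> \<le> (\<Sum>x1\<in>S. \<Sum>x2\<in>S. sample_prob u N x1 * \<bar>c0 - W x2\<bar>)"
  proof (intro sum_mono)
    fix x1 x2 assume "x1 \<in> S" "x2 \<in> S"
    then have sp: "sample_prob u N x1 = c0" using spu by blast
    have "c0 \<ge> 0" by (simp add: c0_def)
    have "ind x1 x2 * (c0 - W x2) \<le> ind x1 x2 * \<bar>c0 - W x2\<bar>"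
      using ind01[of x1 x2] by (intro mult_left_mono) auto
    also have "\<dots> \<le> \<bar>c0 - W x2\<bar>"
      using ind01[of x1 x2] by (intro mult_left_le_one_le) auto
    finally have "c0 * (ind x1 x2 * (c0 - W x2)) \<le> c0 * \<bar>c0 - W x2\<bar>"
      using \<open>c0 \<ge> 0\<close> by (intro mult_left_mono) auto
    then have "ind x1 x2 * c0 * (c0 - W x2) \<le> c0 * \<bar>c0 - W x2\<bar>"
      by (simp add: mult_ac)
    then show "ind x1 x2 * sample_prob u N x1 * (c0 - W x2) \<le> sample_prob u N x1 * \<bar>c0 - W x2\<bar>"
      using sp by simp
  qed
  also have "\<dots> = T" using sumu by (simp add: T_def sum_product[symmetric])
  finally have "1 - \<alpha> - \<beta> \<le> T" using avg H0uu by linarith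
  \<comment> \<open>chi-square bound\<close>
  have "T^2 \<le> (\<Sum>x\<in>S. (\<bar>c0 - W x\<bar>)^2) * card S"
    unfolding T_def by (rule sum_squared_le_sum_of_squares)
  also have "\<dots> = real n ^ N * (\<Sum>x\<in>S. (W x)^2) - 2 * (c0 * real n ^ N) * (\<Sum>x\<in>S. W x) + (c0 * real n ^ N) * (c0 * real (card S))"
    using cardS by (simp add: power2_eq_square algebra_simps sum.distrib sum_subtractf sum_distrib_left sum_distrib_right)
  also have "(\<Sum>x\<in>S. W x) = 1"
  proof -
    have "(\<Sum>x\<in>S. W x) = (\<Sum>s\<in>SS K. \<Sum>x\<in>S. sample_prob (qs n s) N x) / M"
      by (simp add: W_def sum_divide_distrib[symmetric] sum.swap[of _ S])
    also have "\<dots> = (\<Sum>s\<in>SS K. 1) / M"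
      using qs_simplex[of _ n] sum_sp n by (intro arg_cong[where f="\<lambda>t. t / M"] sum.cong) (auto simp: K_def)
    finally show ?thesis by (simp add: M_def card_SS)
  qed
  also have "real n ^ N * (\<Sum>x\<in>S. (W x)^2) \<le> (1 + (2 * real N / real n)^2) ^ K"
    using W2[of n N] n Nn unfolding W_def S_def M_def K_def by simp
  finally have "T^2 \<le> (1 + (2 * real N / real n)^2) ^ K - 1"
    using c0n cardS by simp
  then have "T \<le> sqrt ((1 + (2 * real N / real n)^2) ^ K - 1)"
    by (simp add: real_le_rsqrt T_def)
  then show ?thesis using \<open>1 - \<alpha> - \<beta> \<le> T\<close> unfolding K_def by linarith
qed

theorem proposition3:
  fixes \<alpha> \<beta> \<epsilon> :: real
  assumes "0 < \<alpha>" "\<alpha> < 1/2" "0 < \<beta>" "\<beta> < 1/2" "0 < \<epsilon>" "\<epsilon> < 1/2"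
  shows "\<exists>c>0. \<forall>n N :: nat. \<forall>psi :: (nat \<Rightarrow> nat) \<Rightarrow> (nat \<Rightarrow> nat) \<Rightarrow> bool.
           1 \<le> n \<longrightarrow> 1 \<le> N \<longrightarrow>
           (\<forall>p\<in>simplex n. prob_H1 n N p p psi \<le> \<alpha>) \<longrightarrow>
           (\<forall>p\<in>simplex n. \<forall>q\<in>simplex n.
              l2norm n (\<lambda>i. p i - q i) \<ge> \<epsilon> * l2norm n p \<longrightarrow> prob_H0 n N p q psi \<le> \<beta>) \<longrightarrow>
           real N \<ge> c * sqrt (real n)"
proof -
  define g where "g = 1 - \<alpha> - \<beta>"
  have g0: "g > 0" using assms by (simp add: g_def)
  define L where "L = ln (1 + g^2)"
  have L0: "L > 0" unfolding L_def using g0 by (intro ln_gt_zero) simp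
  define c where "c = min (1/2) (sqrt (L / 2))"
  have c0: "c > 0" using L0 by (simp add: c_def)
  have c12: "c \<le> 1/2" by (simp add: c_def)
  have c2L: "2 * c^2 \<le> L"
  proof -
    have "c^2 \<le> (sqrt (L/2))^2" using c0 by (intro power_mono) (auto simp: c_def)
    then show ?thesis using L0 by simp
  qed
  show ?thesis
  proof (intro exI[of _ c] conjI allI impI)
    show "c > 0" by (rule c0)
    fix n N :: nat and psi :: "(nat \<Rightarrow> nat) \<Rightarrow> (nat \<Rightarrow> nat) \<Rightarrow> bool"
    assume n1: "1 \<le> n" and N1: "1 \<le> N"
      and H1: "\<forall>p\<in>simplex n. prob_H1 n N p p psi \<le> \<alpha>"
      and H0: "\<forall>p\<in>simplex n. \<forall>q\<in>simplex n.
              l2norm n (\<lambda>i. p i - q i) \<ge> \<epsilon> * l2norm n p \<longrightarrow> prob_H0 n N p q psi \<le> \<beta>"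
    show "real N \<ge> c * sqrt (real n)"
    proof (rule ccontr)
      assume "\<not> real N \<ge> c * sqrt (real n)"
      then have lt: "real N < c * sqrt (real n)" by simp
      have "(real N)^2 < (c * sqrt (real n))^2"
        using lt by (intro power_strict_mono) auto
      then have N2: "(real N)^2 < c^2 * n" by (simp add: power_mult_distrib)
      have "c^2 \<le> (1/2)^2" using c0 c12 by (intro power_mono) auto
      then have "c^2 * n \<le> (1/2)^2 * n" by (intro mult_right_mono) auto
      then have N4: "(real N)^2 < real n / 4" using N2 by (simp add: power_divide)
      have "real N \<le> (real N)^2" using N1 by (simp add: power2_eq_square)
      then have "4 * real N < real n" using N4 by linarith
      then have Nn: "2 * N \<le> n" and n2: "n \<ge> 2" using N1 by linarith+
      define K where "K = n div 2"
      define b :: real where "b = 2 * real N / real n"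
      have "g \<le> sqrt ((1 + b^2) ^ K - 1)"
        using core[OF n2 Nn assms(5,6) H1 H0] unfolding g_def b_def K_def by simp
      moreover have "(1 + b^2) ^ K < 1 + g^2"
      proof -
        have "(1 + b^2) ^ K \<le> exp (b^2) ^ K"
          by (intro power_mono) (auto simp: exp_ge_add_one_self add_nonneg_nonneg)
        also have "\<dots> = exp (real K * b^2)" by (simp add: exp_of_nat_mult)
        also have "\<dots> < exp L"
        proof -
          have "real K \<le> real n / 2" unfolding K_def by linarith
          then have "real K * b^2 \<le> real n / 2 * b^2" by (intro mult_right_mono) auto
          also have "\<dots> = 2 * (real N)^2 / real n" using n2 by (simp add: b_def power2_eq_square field_simps)
          also have "\<dots> < 2 * c^2" using N2 n2 by (simp add: field_simps)
          finally show ?thesis using c2L by simp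
        qed
        also have "\<dots> = 1 + g^2" unfolding L_def by (intro exp_ln) (simp add: add_pos_nonneg)
        finally show ?thesis .
      qed
      then have "sqrt ((1 + b^2) ^ K - 1) < sqrt (g^2)" by (intro real_sqrt_less_mono) simp
      then have "sqrt ((1 + b^2) ^ K - 1) < g" using g0 by simp
      ultimately show False by simp
    qed
  qed
qed

end
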